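(* For arbitrary inputs of $n$ elements with distinct keys distributed over $p$ processes with $n/p$ elements each, the distributed phase of Janus Quicksort (JQuick), as described in the context, takes $O(\alpha\log^2 p + \beta (n/p)\log p)$ time with probability $1-O(p^{-6})$, and the base cases take $O(\alpha + \beta n/p + (n/p)\log(n/p))$ time.
   Context: Cost model: (symmetric) single-ported message passing: sending a message of $l$ machine words takes time $\alpha + l\beta$, with $\alpha \gg \beta \gg 1$, the unit being the time of a simple machine instruction; a data element occupies one machine word. Broadcast, reduction and prefix sums of vectors of length $l$ over $p$ processes can be done in time $O(\beta l + \alpha\log p)$. Janus Quicksort (JQuick) is a recursive distributed-memory sorting algorithm. The input is $n$ elements with pairwise distinct keys, distributed over $p$ processes numbered $0,\dots,p-1$ with exactly $n/p$ elements per process ($n$ a multiple of $p$); the output is globally sorted with each process holding $n/p$ elements of consecutive ranks. The algorithm maintains tasks; a task is a contiguous range of processes together with a contiguous range of the global sorted order that these processes jointly hold, every process holding exactly $n/p$ elements in total over all tasks it belongs to. A process may belong to two tasks at once (a "janus process"); it then performs the local work of both tasks and executes all communication of both tasks simultaneously with nonblocking operations. The distributed phase consists of distributed recursion levels; one level on a task performs: (1) pivot selection: an element of the task chosen uniformly at random is broadcast to the task's processes; (2) partitioning: each process splits its elements of the task into small elements (smaller than the pivot) and large elements (at least the pivot); (3) data assignment, computed with prefix sums and broadcasts in $O(\alpha\log p)$ time: the small elements are assigned to a left group (an initial segment of the task's processes) and the large elements to a right group (a final segment), so that every process again holds exactly $n/p$ elements in total, the two groups sharing at most one (janus) process, and such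 that each process sends and receives at most a constant number of messages (deterministic message assignment); (4) data exchange according to the assignment. The left group then recursively sorts the small elements and the right group the large ones. A task covering only one or two processes is a base case; after the distributed phase, base cases are sorted: a one-process base case is sorted locally; in a two-process base case each process receives the other's elements, selects via quickselect the elements it must keep according to its load, and sorts them locally. *)

theory Defs
  imports "HOL-Probability.Probability"
begin

text \<open>Elements are identified with their global ranks
  0..n-1 (keys are pairwise distinct), n = p*m with m = n/p. Process i finally holds
  the ranks in its slot [i*m, (i+1)*m). A task is a contiguous rank range [lo,hi);
  its processes are those whose slots intersect the range, and each such process
  holds exactly the ranks of the task lying in its slot.\<close>

definition task_procs :: "nat \<Rightarrow> nat \<Rightarrow> nat \<Rightarrow> nat set" where
  "task_procs m lo hi = (if lo < hi then {lo div m .. (hi - 1) div m} else {})"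

definition nprocs :: "nat \<Rightarrow> nat \<Rightarrow> nat \<Rightarrow> nat" where
  "nprocs m lo hi = card (task_procs m lo hi)"

definition load :: "nat \<Rightarrow> nat \<Rightarrow> nat \<Rightarrow> nat \<Rightarrow> nat" where
  "load m lo hi P = card ({lo..<hi} \<inter> {P*m..<(P+1)*m})"

text \<open>Time of one distributed recursion level on a task with q processes:
  pivot broadcast, prefix sums and broadcasts for the data assignment
  (alpha * log q), plus the data exchange with a constant number of messages
  of at most n/p words per process (alpha + beta * n/p).\<close>
definition level_cost :: "real \<Rightarrow> real \<Rightarrow> nat \<Rightarrow> nat \<Rightarrow> real" where
  "level_cost \<alpha> \<beta> m q = \<alpha> * (1 + log 2 (real q)) + \<beta> * real m"

text \<open>Random execution of the distributed phase on task [lo,hi), with a fuel bound on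
  the recursion depth. Result: None if the fuel ran out, otherwise Some (t, bs) where t
  is the (critical path) time of the distributed phase and bs the list of base cases.\<close>
fun jq :: "nat \<Rightarrow> real \<Rightarrow> real \<Rightarrow> nat \<Rightarrow> nat \<Rightarrow> nat \<Rightarrow> (real \<times> (nat \<times> nat) list) option pmf" where
  "jq 0 \<alpha> \<beta> m lo hi =
     (if hi \<le> lo then return_pmf (Some (0, []))
      else if nprocs m lo hi \<le> 2 then return_pmf (Some (0, [(lo, hi)]))
      else return_pmf None)"
| "jq (Suc f) \<alpha> \<beta> m lo hi =
     (if hi \<le> lo then return_pmf (Some (0, []))
      else if nprocs m lo hi \<le> 2 then return_pmf (Some (0, [(lo, hi)]))
      else do {
        r \<leftarrow> pmf_of_set {lo..<hi};
        L \<leftarrow> jq f \<alpha> \<beta> m lo r;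
        R \<leftarrow> jq f \<alpha> \<beta> m r hi;
        return_pmf (case (L, R) of
            (Some (tL, bl), Some (tR, br)) \<Rightarrow>
              Some (level_cost \<alpha> \<beta> m (nprocs m lo hi) + max tL tR, bl @ br)
          | _ \<Rightarrow> None)
      })"

definition sort_cost :: "nat \<Rightarrow> real" where
  "sort_cost k = real k * log 2 (real k)"

text \<open>Time process P spends on base case [lo,hi): one-process base case: local sort;
  two-process base case: receive the other's elements, select (linear time) the
  elements to keep among all elements of the base case, sort them.\<close>
definition base_cost :: "real \<Rightarrow> real \<Rightarrow> nat \<Rightarrow> nat \<Rightarrow> nat \<times> nat \<Rightarrow> real" where
  "base_cost \<alpha> \<beta> m P b = (case b of (lo, hi) \<Rightarrow>
     (if P \<notin> task_procs m lo hi then 0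
      else if nprocs m lo hi = 1 then sort_cost (load m lo hi P)
      else \<alpha> + \<beta> * real (hi - lo - load m lo hi P) + real (hi - lo)
           + sort_cost (load m lo hi P)))"

text \<open>Total base-case time of process P (a janus process may be in two base cases).\<close>
definition base_time :: "real \<Rightarrow> real \<Rightarrow> nat \<Rightarrow> (nat \<times> nat) list \<Rightarrow> nat \<Rightarrow> real" where
  "base_time \<alpha> \<beta> m bs P = sum_list (map (base_cost \<alpha> \<beta> m P) bs)"

end

theory Submission imports Defs begin

lemma measure_bind_pmf': "measure_pmf.prob (bind_pmf M N) X = (\<integral>x. measure_pmf.prob (N x) X \<partial>M)"
proof -
  have "emeasure (bind_pmf M N) X = (\<integral>\<^sup>+x. ennreal (measure_pmf.prob (N x) X) \<partial>M)"
    using emeasure_bind_pmf[of M N X] by (simp add: measure_pmf.emeasure_eq_measure del: emeasure_bind_pmf)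
  also have "\<dots> = ennreal (\<integral>x. measure_pmf.prob (N x) X \<partial>M)"
    by (rule nn_integral_eq_integral) (auto intro!: measure_pmf.integrable_const_bound[where B=1])
  finally show ?thesis
    by (simp add: measure_pmf.emeasure_eq_measure integral_nonneg_AE)
qed

lemma nprocs_eq: "lo < hi \<Longrightarrow> nprocs m lo hi = Suc ((hi - 1) div m) - lo div m"
  by (simp add: nprocs_def task_procs_def)

lemma nprocs_big:
  assumes "lo < hi" "0 < m" "\<not> nprocs m lo hi \<le> 2"
  shows "lo + m < hi"
proof -
  have "(hi - 1) div m \<ge> lo div m + 2" using assms nprocs_eq[of lo hi m] by simp
  then have "m * (lo div m + 2) \<le> m * ((hi - 1) div m)" by (rule mult_le_mono2)
  also have "\<dots> \<le> hi - 1" by simp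
  finally have a: "m * (lo div m + 2) \<le> hi - 1" .
  have "lo < m * (lo div m + 1)" using assms(2)
    by (metis add.commute div_mult_mod_eq mod_less_divisor nat_add_left_cancel_less
        distrib_left mult.comm_neutral mult.commute)
  then show ?thesis using a by (simp add: algebra_simps)
qed

lemma nprocs_le:
  assumes "lo < hi" "0 < m" "hi \<le> p * m"
  shows "nprocs m lo hi \<le> p"
proof -
  have "hi - 1 < p * m" using assms by simp
  then have "(hi - 1) div m < p" using assms(2) by (simp add: div_less_iff_less_mult)
  then show ?thesis using nprocs_eq[OF assms(1), of m] by simp
qed

lemma sumsq_nat: "6 * (\<Sum>j<s. real j ^ 2) = real (s - 1) * real s * (2 * real s - 1)"
proof (induction s)
  case 0 then show ?case by simp
next
  case (Suc s) then show ?case by (cases s) (simp_all add: algebra_simps power2_eq_square)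
qed

lemma sumsq_bound:
  assumes "2 \<le> s"
  shows "(\<Sum>j<s. real j ^ 2 + real (s - j) ^ 2) \<le> 3/4 * real s ^ 3"
proof -
  have r: "(\<Sum>j<s. real (s - j) ^ 2) = (\<Sum>j<s. real (Suc j) ^ 2)"
    using sum.nat_diff_reindex[of "\<lambda>j. real (Suc j) ^ 2" s]
    by (metis (no_types, lifting) Suc_diff_Suc lessThan_iff sum.cong)
  have r2: "(\<Sum>j<s. real (Suc j) ^ 2) = (\<Sum>j<s. real j ^ 2) + real s ^ 2"
    by (induction s) simp_all
  have "(\<Sum>j<s. real j ^ 2 + real (s - j) ^ 2) = 2 * (\<Sum>j<s. real j ^ 2) + real s ^ 2"
    unfolding sum.distrib r r2 by simp
  also have "\<dots> = (real (s - 1) * real s * (2 * real s - 1)) / 3 + real s ^ 2"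
    using sumsq_nat[of s] by simp
  also have "\<dots> = (2 * real s ^ 3 + real s) / 3"
    using assms by (simp add: of_nat_diff field_simps power2_eq_square power3_eq_cube)
  also have "\<dots> \<le> 3/4 * real s ^ 3"
  proof -
    have s2: "2 \<le> real s" using assms by simp
    have "2 * 2 \<le> real s * real s" by (rule mult_mono[OF s2 s2]) simp_all
    then have "4 * real s \<le> (real s * real s) * real s" by (intro mult_right_mono) simp_all
    then show ?thesis by (simp add: power3_eq_cube)
  qed
  finally show ?thesis .
qed
definition goodset :: "real \<Rightarrow> (real \<times> (nat \<times> nat) list) option set" where
  "goodset B = {Some (t, bs) | t bs. t \<le> B}"

definition comb :: "real \<Rightarrow> (real \<times> (nat \<times> nat) list) option \<Rightarrow> (real \<times> (nat \<times> nat) list) option \<Rightarrow> (real \<times> (nat \<times> nat) list) option" where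
  "comb c L R = (case (L, R) of
            (Some (tL, bl), Some (tR, br)) \<Rightarrow> Some (c + max tL tR, bl @ br)
          | _ \<Rightarrow> None)"

lemma jq_triv: "hi \<le> lo \<or> nprocs m lo hi \<le> 2 \<Longrightarrow> \<exists>bs. jq f \<alpha> \<beta> m lo hi = return_pmf (Some (0, bs))"
  by (cases f) auto

lemma jq_step: "\<not> hi \<le> lo \<Longrightarrow> \<not> nprocs m lo hi \<le> 2 \<Longrightarrow>
  jq (Suc f) \<alpha> \<beta> m lo hi = pmf_of_set {lo..<hi} \<bind> (\<lambda>r. map_pmf (case_prod (comb (level_cost \<alpha> \<beta> m (nprocs m lo hi))))
     (pair_pmf (jq f \<alpha> \<beta> m lo r) (jq f \<alpha> \<beta> m r hi)))"
  by (simp add: pair_pmf_def map_bind_pmf comb_def)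

lemma comb_good: "L \<in> goodset B \<Longrightarrow> R \<in> goodset B \<Longrightarrow> c \<le> c' \<Longrightarrow> comb c L R \<in> goodset (c' + B)"
  by (auto simp: goodset_def comb_def)

lemma prob_pair_union:
  "measure_pmf.prob (pair_pmf A B) (fst -` X \<union> snd -` Y) \<le> measure_pmf.prob A X + measure_pmf.prob B Y"
proof -
  have "measure_pmf.prob (pair_pmf A B) (fst -` X \<union> snd -` Y) \<le>
     measure_pmf.prob (pair_pmf A B) (fst -` X) + measure_pmf.prob (pair_pmf A B) (snd -` Y)"
    by (rule measure_Un_le) simp_all
  also have "measure_pmf.prob (pair_pmf A B) (fst -` X) = measure_pmf.prob A X"
    using measure_map_pmf[of fst "pair_pmf A B" X] by (simp add: map_fst_pair_pmf)
  also have "measure_pmf.prob (pair_pmf A B) (snd -` Y) = measure_pmf.prob B Y"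
    using measure_map_pmf[of snd "pair_pmf A B" Y] by (simp add: map_snd_pair_pmf)
  finally show ?thesis .
qed

lemma jq_tail:
  assumes p: "1 \<le> p" and m: "1 \<le> m" and b: "0 \<le> \<beta>" and a: "\<beta> \<le> \<alpha>"
  defines "Lc \<equiv> \<alpha> * (1 + log 2 (real p)) + \<beta> * real m"
  shows "k \<le> f \<Longrightarrow> hi \<le> p * m \<Longrightarrow>
    measure_pmf.prob (jq f \<alpha> \<beta> m lo hi) (- goodset (real k * Lc)) \<le> (3/4)^k * real (hi - lo)^2 / real m^2"
proof (induction k arbitrary: f lo hi)
  have Lc0: "0 \<le> Lc" unfolding Lc_def using p m a b by (simp add: add_nonneg_nonneg)
  {
    case 0
    show ?case
    proof (cases "hi \<le> lo \<or> nprocs m lo hi \<le> 2")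
      case True
      then obtain bs where "jq f \<alpha> \<beta> m lo hi = return_pmf (Some (0, bs))" using jq_triv by blast
      then show ?thesis by (simp add: goodset_def)
    next
      case False
      then have "lo + m < hi" using nprocs_big[of lo hi m] m by auto
      then have "real m \<le> real (hi - lo)" by simp
      then have "real m ^ 2 \<le> real (hi - lo) ^ 2" by (intro power_mono) simp_all
      then have "1 \<le> real (hi - lo)^2 / real m^2" using m by simp
      then show ?thesis using order_trans[OF measure_pmf.prob_le_1] by simp
    qed
  }
  {
    case (Suc k)
    show ?case
    proof (cases "hi \<le> lo \<or> nprocs m lo hi \<le> 2")
      case True
      then obtain bs where "jq f \<alpha> \<beta> m lo hi = return_pmf (Some (0, bs))" using jq_triv by blast
      then show ?thesis using Lc0 by (simp add: goodset_def)
    next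
      case False
      obtain f' where f: "f = Suc f'" and kf: "k \<le> f'" using Suc.prems by (cases f) auto
      define s where "s = hi - lo"
      have big: "lo + m < hi" using False nprocs_big[of lo hi m] m by auto
      have s2: "2 \<le> s" using big m unfolding s_def by simp
      have np: "nprocs m lo hi \<le> p" using nprocs_le[of lo hi m p] False m Suc.prems by auto
      have np3: "1 \<le> nprocs m lo hi" using False by simp
      have lcle: "level_cost \<alpha> \<beta> m (nprocs m lo hi) \<le> Lc"
        unfolding level_cost_def Lc_def
        using np np3 a b by (intro add_mono mult_left_mono) simp_all
      let ?X = "- goodset (real k * Lc)"
      let ?Y = "- goodset (real (Suc k) * Lc)"
      let ?c = "level_cost \<alpha> \<beta> m (nprocs m lo hi)"
      have trm: "measure_pmf.prob (map_pmf (case_prod (comb ?c)) (pair_pmf (jq f' \<alpha> \<beta> m lo r) (jq f' \<alpha> \<beta> m r hi))) ?Y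
          \<le> (3/4)^k * (real (r - lo)^2 + real (hi - r)^2) / real m^2" if r: "r \<in> {lo..<hi}" for r
      proof -
        have sub: "case_prod (comb ?c) -` ?Y \<subseteq> fst -` ?X \<union> snd -` ?X"
        proof
          fix x assume "x \<in> case_prod (comb ?c) -` ?Y"
          moreover have "fst x \<in> goodset (real k * Lc) \<Longrightarrow> snd x \<in> goodset (real k * Lc) \<Longrightarrow> x \<notin> case_prod (comb ?c) -` ?Y"
            using comb_good[OF _ _ lcle, of "fst x" "real k * Lc" "snd x"]
            by (cases x) (simp add: algebra_simps)
          ultimately show "x \<in> fst -` ?X \<union> snd -` ?X" by blast
        qed
        have "measure_pmf.prob (map_pmf (case_prod (comb ?c)) (pair_pmf (jq f' \<alpha> \<beta> m lo r) (jq f' \<alpha> \<beta> m r hi))) ?Y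
           \<le> measure_pmf.prob (pair_pmf (jq f' \<alpha> \<beta> m lo r) (jq f' \<alpha> \<beta> m r hi)) (fst -` ?X \<union> snd -` ?X)"
          unfolding measure_map_pmf by (rule measure_pmf.finite_measure_mono[OF sub]) simp
        also have "\<dots> \<le> measure_pmf.prob (jq f' \<alpha> \<beta> m lo r) ?X + measure_pmf.prob (jq f' \<alpha> \<beta> m r hi) ?X"
          by (rule prob_pair_union)
        also have "\<dots> \<le> (3/4)^k * real (r - lo)^2 / real m^2 + (3/4)^k * real (hi - r)^2 / real m^2"
          using r Suc.prems by (intro add_mono Suc.IH kf) auto
        finally show ?thesis by (simp add: add_divide_distrib algebra_simps)
      qed
      have "measure_pmf.prob (jq f \<alpha> \<beta> m lo hi) ?Y =
        (\<Sum>r\<in>{lo..<hi}. measure_pmf.prob (map_pmf (case_prod (comb ?c)) (pair_pmf (jq f' \<alpha> \<beta> m lo r) (jq f' \<alpha> \<beta> m r hi))) ?Y) / real s"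
        unfolding f jq_step[OF conjunct1[OF False[unfolded de_Morgan_disj]] conjunct2[OF False[unfolded de_Morgan_disj]]]
          measure_bind_pmf' s_def
        using big by (subst integral_pmf_of_set) auto
      also have "\<dots> \<le> (\<Sum>r\<in>{lo..<hi}. (3/4)^k * (real (r - lo)^2 + real (hi - r)^2) / real m^2) / real s"
        using s2 by (intro divide_right_mono sum_mono trm) auto
      also have "(\<Sum>r\<in>{lo..<hi}. (3/4)^k * (real (r - lo)^2 + real (hi - r)^2) / real m^2)
          = (3/4)^k / real m^2 * (\<Sum>j<s. real j ^ 2 + real (s - j) ^ 2)"
      proof -
        have "(\<Sum>r\<in>{lo..<hi}. real (r - lo)^2 + real (hi - r)^2) = (\<Sum>j<s. real j ^ 2 + real (s - j) ^ 2)"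
        proof -
          have "{lo..<hi} = (\<lambda>j. j + lo) ` {..<s}" unfolding s_def using big
            by (auto simp: image_iff) (metis add.commute diff_less_mono le_add_diff_inverse lessThan_iff)
          then show ?thesis unfolding s_def by (simp add: sum.reindex inj_on_def add.commute)
        qed
        then show ?thesis by (simp add: sum_distrib_left[symmetric] sum_divide_distrib[symmetric])
      qed
      also have "(3/4)^k / real m^2 * (\<Sum>j<s. real j ^ 2 + real (s - j) ^ 2) / real s
          \<le> (3/4)^k / real m^2 * (3/4 * real s ^ 3) / real s"
        using s2 by (intro divide_right_mono mult_left_mono sumsq_bound) auto
      also have "\<dots> = (3/4)^(Suc k) * real (hi - lo)^2 / real m^2"
        using s2 unfolding s_def by (simp add: power3_eq_cube power2_eq_square)
      finally show ?thesis .
    qed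
  }
qed


definition binv :: "nat \<Rightarrow> nat \<Rightarrow> nat \<Rightarrow> (nat \<times> nat) list \<Rightarrow> bool" where
  "binv m lo hi bs = (sorted_wrt (\<lambda>x y. snd x \<le> fst y) bs \<and> (\<forall>(a,b)\<in>set bs. lo \<le> a \<and> a < b \<and> b \<le> hi \<and> nprocs m a b \<le> 2))"

lemma jq_inv: "Some (t, bs) \<in> set_pmf (jq f \<alpha> \<beta> m lo hi) \<Longrightarrow> binv m lo hi bs"
proof (induction f arbitrary: lo hi t bs)
  case 0
  then show ?case by (auto simp: binv_def split: if_splits)
next
  case (Suc f)
  show ?case
  proof (cases "hi \<le> lo \<or> nprocs m lo hi \<le> 2")
    case True
    then show ?thesis using Suc.prems by (auto simp: binv_def split: if_splits)
  next
    case False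
    then have ne: "\<not> hi \<le> lo" "\<not> nprocs m lo hi \<le> 2" by auto
    from Suc.prems[unfolded jq_step[OF ne]] ne obtain r L R where
      r: "lo \<le> r" "r < hi" and L: "L \<in> set_pmf (jq f \<alpha> \<beta> m lo r)" and R: "R \<in> set_pmf (jq f \<alpha> \<beta> m r hi)"
      and c: "comb (level_cost \<alpha> \<beta> m (nprocs m lo hi)) L R = Some (t, bs)"
      by (auto simp: set_pair_pmf)
    from c obtain tL bl tR br where LR: "L = Some (tL, bl)" "R = Some (tR, br)" and bs: "bs = bl @ br"
      by (auto simp: comb_def split: option.splits)
    have iL: "binv m lo r bl" using Suc.IH L LR by blast
    have iR: "binv m r hi br" using Suc.IH R LR by blast
    show ?thesis using iL iR r unfolding bs binv_def
      by (fastforce simp: sorted_wrt_append)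
  qed
qed

lemma sum_card:
  fixes bs :: "(nat \<times> nat) list"
  assumes "finite S"
  shows "sorted_wrt (\<lambda>x y. snd x \<le> fst y) bs \<Longrightarrow>
    sum_list (map (\<lambda>(a,b). real (card ({a..<b} \<inter> S))) bs) = real (card ((\<Union>(a,b)\<in>set bs. {a..<b}) \<inter> S))"
proof (induction bs)
  case Nil then show ?case by simp
next
  case (Cons x bs)
  obtain a b where x: "x = (a, b)" by (cases x)
  have d: "({a..<b} \<inter> S) \<inter> ((\<Union>(a,b)\<in>set bs. {a..<b}) \<inter> S) = {}"
  proof -
    have "\<forall>y\<in>set bs. b \<le> fst y" using Cons.prems x by simp
    have "z \<notin> (\<Union>(a,b)\<in>set bs. {a..<b})" if "z \<in> {a..<b}" for z
    proof
      assume "z \<in> (\<Union>(a,b)\<in>set bs. {a..<b})"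
      then obtain c d where cd: "(c, d) \<in> set bs" "z \<in> {c..<d}" by auto
      then have "b \<le> c" using \<open>\<forall>y\<in>set bs. b \<le> fst y\<close> by force
      have "c \<le> z" "z < b" using cd that by auto
      then show False using \<open>b \<le> c\<close> by linarith
    qed
    then show ?thesis by blast
  qed
  have "(\<Union>(a,b)\<in>set (x # bs). {a..<b}) \<inter> S = ({a..<b} \<inter> S) \<union> ((\<Union>(a,b)\<in>set bs. {a..<b}) \<inter> S)"
    using x by auto
  then show ?case using Cons x d assms by (simp add: card_Un_disjoint)
qed

lemma sum_card_le:
  fixes bs :: "(nat \<times> nat) list"
  assumes "finite S" "sorted_wrt (\<lambda>x y. snd x \<le> fst y) bs"
  shows "sum_list (map (\<lambda>(a,b). real (card ({a..<b} \<inter> S))) bs) \<le> real (card S)"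
  unfolding sum_card[OF assms] using assms(1) by (simp add: card_mono)

lemma sort_cost_le: "l \<le> m \<Longrightarrow> sort_cost l \<le> real l * log 2 (real m)"
  unfolding sort_cost_def by (cases "l = 0") (auto intro!: mult_left_mono)

lemma bc_bound:
  assumes ab: "a < b" and np: "nprocs m a b \<le> 2" and m: "1 \<le> m" and b: "0 \<le> \<beta>" and al: "\<beta> \<le> \<alpha>"
  shows "base_cost \<alpha> \<beta> m P (a,b) \<le> real (card ({a..<b} \<inter> {P*m..<(P+1)*m})) * log 2 (real m)
     + (\<alpha> + 2*\<beta>*real m + 2*real m) * (real (card ({a..<b} \<inter> {P*m})) + real (card ({a..<b} \<inter> {(P+1)*m})))"
proof -
  let ?l = "load m a b P"
  have lm: "?l \<le> m" unfolding load_def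
    using card_mono[of "{P*m..<(P+1)*m}" "{a..<b} \<inter> {P*m..<(P+1)*m}"] by simp
  have sc: "sort_cost ?l \<le> real ?l * log 2 (real m)" by (rule sort_cost_le[OF lm])
  have lg: "0 \<le> log 2 (real m)" using m by simp
  have K0: "0 \<le> \<alpha> + 2*\<beta>*real m + 2*real m" using b al by simp
  have R0: "0 \<le> (\<alpha> + 2*\<beta>*real m + 2*real m) * (real (card ({a..<b} \<inter> {P*m})) + real (card ({a..<b} \<inter> {(P+1)*m})))"
    using K0 by simp
  show ?thesis
  proof (cases "P \<in> task_procs m a b")
    case False
    then show ?thesis using R0 lg by (simp add: base_cost_def)
  next
    case inP: True
    show ?thesis
    proof (cases "nprocs m a b = 1")
      case True
      then show ?thesis using inP R0 sc by (simp add: base_cost_def load_def)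
    next
      case False
      have two: "(b - 1) div m = a div m + 1"
        using False np nprocs_eq[OF ab, of m] inP by (auto simp: task_procs_def split: if_splits)
      have Pc: "P = a div m \<or> P = a div m + 1" using inP two ab by (auto simp: task_procs_def)
      have am: "a div m * m \<le> a" by simp
      have lt: "x < (x div m + 1) * m" for x
      proof -
        have e: "x div m * m + x mod m = x" by simp
        have mm: "x mod m < m" using m by simp
        show ?thesis unfolding distrib_right using e mm by linarith
      qed
      have am2: "a < (a div m + 1) * m" by (rule lt)
      have bm: "(a div m + 1) * m \<le> b - 1"
      proof -
        have "(b - 1) div m * m \<le> b - 1" by simp
        from this show ?thesis unfolding two .
      qed
      have bm2: "b - 1 < (a div m + 2) * m" using lt[of "b - 1"] two by simp
      have e2: "(a div m + 2) * m = a div m * m + 2*m" by (simp add: distrib_right)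
      have size: "b - a \<le> 2 * m" using am bm2 ab unfolding e2 by linarith
      have one: "real (card ({a..<b} \<inter> {P*m})) + real (card ({a..<b} \<inter> {(P+1)*m})) \<ge> 1"
      proof (cases "P = a div m")
        case True
        then have "(P+1)*m \<in> {a..<b}" using am2 bm ab by auto
        then show ?thesis by simp
      next
        case False
        then have "P = a div m + 1" using Pc by simp
        then have "P*m \<in> {a..<b}" using am2 bm ab by auto
        then show ?thesis by simp
      qed
      have "base_cost \<alpha> \<beta> m P (a,b) = \<alpha> + \<beta> * real (b - a - ?l) + real (b - a) + sort_cost ?l"
        using inP False by (simp add: base_cost_def)
      also have "\<dots> \<le> (\<alpha> + 2*\<beta>*real m + 2*real m) * 1 + real ?l * log 2 (real m)"
      proof -
        have "real (b - a - ?l) \<le> 2 * real m" using size by linarith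
        then have "\<beta> * real (b - a - ?l) \<le> \<beta> * (2 * real m)" using b by (rule mult_left_mono)
        moreover have "real (b - a) \<le> 2 * real m" using size by linarith
        ultimately show ?thesis using sc by simp
      qed
      also have "\<dots> \<le> (\<alpha> + 2*\<beta>*real m + 2*real m) * (real (card ({a..<b} \<inter> {P*m})) + real (card ({a..<b} \<inter> {(P+1)*m})))
           + real ?l * log 2 (real m)"
        using mult_left_mono[OF one K0] by simp
      finally show ?thesis by (simp add: load_def)
    qed
  qed
qed


lemma sum_list_split:
  fixes X K :: real
  shows "sum_list (map (\<lambda>(a,b). X * f1 a b + K * (f2 a b + f3 a b)) (bs :: (nat \<times> nat) list)) =
   X * sum_list (map (\<lambda>(a,b). f1 a b) bs) + K * (sum_list (map (\<lambda>(a,b). f2 a b) bs) + sum_list (map (\<lambda>(a,b). f3 a b) bs))"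
  by (induction bs) (auto simp: algebra_simps)

lemma base_part:
  assumes inv: "binv m lo hi bs" and m: "1 \<le> m" and b: "1 \<le> \<beta>" and al: "\<beta> \<le> \<alpha>"
  shows "base_time \<alpha> \<beta> m bs P \<le> 80 * (\<alpha> + \<beta> * real m + real m * log 2 (real m))"
proof -
  let ?K = "\<alpha> + 2*\<beta>*real m + 2*real m"
  let ?X = "log 2 (real m)"
  have srt: "sorted_wrt (\<lambda>x y. snd x \<le> fst y) bs" and el: "\<forall>(a,b)\<in>set bs. a < b \<and> nprocs m a b \<le> 2"
    using inv unfolding binv_def by auto
  have "base_time \<alpha> \<beta> m bs P \<le> sum_list (map (\<lambda>(a,b). ?X * real (card ({a..<b} \<inter> {P*m..<(P+1)*m}))
      + ?K * (real (card ({a..<b} \<inter> {P*m})) + real (card ({a..<b} \<inter> {(P+1)*m})))) bs)"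
    unfolding base_time_def
  proof (rule sum_list_mono)
    fix x assume "x \<in> set bs"
    then obtain a b' where x: "x = (a, b')" "a < b'" "nprocs m a b' \<le> 2" using el by auto
    show "base_cost \<alpha> \<beta> m P x \<le> (case x of (a,b) \<Rightarrow> ?X * real (card ({a..<b} \<inter> {P*m..<(P+1)*m}))
      + ?K * (real (card ({a..<b} \<inter> {P*m})) + real (card ({a..<b} \<inter> {(P+1)*m}))))"
      using bc_bound[OF x(2) x(3) m _ al, of P] b x(1) by (simp add: mult.commute)
  qed
  also have "\<dots> = ?X * sum_list (map (\<lambda>(a,b). real (card ({a..<b} \<inter> {P*m..<(P+1)*m}))) bs)
      + ?K * (sum_list (map (\<lambda>(a,b). real (card ({a..<b} \<inter> {P*m}))) bs) + sum_list (map (\<lambda>(a,b). real (card ({a..<b} \<inter> {(P+1)*m}))) bs))"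
    by (rule sum_list_split)
  also have "\<dots> \<le> ?X * real m + ?K * (1 + 1)"
  proof (intro add_mono mult_left_mono)
    show "sum_list (map (\<lambda>(a,b). real (card ({a..<b} \<inter> {P*m..<(P+1)*m}))) bs) \<le> real m"
      using sum_card_le[OF _ srt, of "{P*m..<(P+1)*m}"] by simp
    show "sum_list (map (\<lambda>(a,b). real (card ({a..<b} \<inter> {P*m}))) bs) \<le> 1"
      using sum_card_le[OF _ srt, of "{P*m}"] by simp
    show "sum_list (map (\<lambda>(a,b). real (card ({a..<b} \<inter> {(P+1)*m}))) bs) \<le> 1"
      using sum_card_le[OF _ srt, of "{(P+1)*m}"] by simp
    show "0 \<le> ?X" using m by simp
    show "0 \<le> ?K" using b al by simp
  qed
  also have "\<dots> \<le> 80 * (\<alpha> + \<beta> * real m + real m * log 2 (real m))"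
  proof -
    have "real m \<le> \<beta> * real m" using b m by simp
    moreover have "0 \<le> real m * log 2 (real m)" using m by simp
    ultimately show ?thesis using b al by (simp add: algebra_simps)
  qed
  finally show ?thesis .
qed

lemma time_bound:
  assumes p: "2 \<le> p" and m: "1 \<le> m" and b: "1 \<le> \<beta>" and al: "\<beta> \<le> \<alpha>"
  assumes c: "real c \<le> log 2 (real p) + 1"
  shows "real (20 * c) * (\<alpha> * (1 + log 2 (real p)) + \<beta> * real m)
     \<le> 80 * (\<alpha> * (log 2 (real p))\<^sup>2 + \<beta> * real m * log 2 (real p))"
proof -
  define L where "L = log 2 (real p)"
  have L1: "1 \<le> L" unfolding L_def using p by simp
  have c2: "real c \<le> 2 * L" using c L1 unfolding L_def by simp
  have a0: "0 \<le> \<alpha>" using b al by simp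
  have bm: "0 \<le> \<beta> * real m" using b by simp
  have Lc: "\<alpha> * (1 + L) + \<beta> * real m \<le> 2 * \<alpha> * L + \<beta> * real m"
    using mult_left_mono[OF L1 a0] by (simp add: algebra_simps)
  have Lc0: "0 \<le> \<alpha> * (1 + L) + \<beta> * real m" using a0 bm L1 by simp
  have "real (20 * c) * (\<alpha> * (1 + L) + \<beta> * real m) \<le> (40 * L) * (2 * \<alpha> * L + \<beta> * real m)"
    using c2 Lc Lc0 by (intro mult_mono) simp_all
  also have "\<dots> = 80 * (\<alpha> * L\<^sup>2) + 40 * (\<beta> * real m * L)"
    by (simp add: algebra_simps power2_eq_square)
  also have "\<dots> \<le> 80 * (\<alpha> * L\<^sup>2 + \<beta> * real m * L)"
    using bm L1 by simp
  finally show ?thesis unfolding L_def .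
qed

lemma prob_bound:
  assumes p: "2 \<le> p" and c: "real p \<le> 2 ^ c"
  shows "(3/4::real)^(20*c) * real p ^ 2 \<le> 80 / real p ^ 6"
proof -
  have p8: "real p ^ 8 \<le> 256 ^ c"
  proof -
    have "real p ^ 8 \<le> (2 ^ c) ^ 8" using c by (intro power_mono) simp_all
    also have "\<dots> = (2^8) ^ c" by (metis power_mult mult.commute)
    also have "\<dots> = 256 ^ c" by simp
    finally show ?thesis .
  qed
  have "(3/4::real)^(20*c) * real p ^ 8 \<le> ((3/4::real)^20)^c * 256 ^ c"
    by (simp add: power_mult mult_left_mono[OF p8])
  also have "\<dots> = ((3/4::real)^20 * 256) ^ c" by (simp add: power_mult_distrib)
  also have "\<dots> \<le> 1" by (rule power_le_one) (simp_all add: power_divide)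
  finally have "(3/4::real)^(20*c) * real p ^ 8 \<le> 1" .
  then have "(3/4::real)^(20*c) * real p ^ 2 * real p ^ 6 \<le> 1"
    by (simp add: mult.assoc power_add[symmetric])
  then have "(3/4::real)^(20*c) * real p ^ 2 \<le> 1 / real p ^ 6"
    using p by (simp add: field_simps)
  also have "\<dots> \<le> 80 / real p ^ 6" using p by (simp add: divide_right_mono)
  finally show ?thesis .
qed


theorem theorem1:
  shows "\<exists>C>0. \<forall>(p::nat) (m::nat) (\<alpha>::real) (\<beta>::real).
    1 \<le> p \<and> 1 \<le> m \<and> 1 \<le> \<beta> \<and> \<beta> \<le> \<alpha> \<longrightarrow>
      (\<forall>\<^sub>F fuel in sequentially.
         measure_pmf.prob (jq fuel \<alpha> \<beta> m 0 (p * m))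
           {Some (t, bs) | t bs. t \<le> C * (\<alpha> * (log 2 (real p))\<^sup>2 + \<beta> * real m * log 2 (real p))}
         \<ge> 1 - C / real p ^ 6)
    \<and> (\<forall>fuel t bs. Some (t, bs) \<in> set_pmf (jq fuel \<alpha> \<beta> m 0 (p * m)) \<longrightarrow>
         (\<forall>P<p. base_time \<alpha> \<beta> m bs P \<le> C * (\<alpha> + \<beta> * real m + real m * log 2 (real m))))"
proof (intro exI[where x=80] conjI allI impI)
  fix p m :: nat and \<alpha> \<beta> :: real
  assume H: "1 \<le> p \<and> 1 \<le> m \<and> 1 \<le> \<beta> \<and> \<beta> \<le> \<alpha>"
  then have p: "1 \<le> p" and m: "1 \<le> m" and b: "1 \<le> \<beta>" and al: "\<beta> \<le> \<alpha>" by auto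
  let ?T = "{Some (t, bs) | t bs. t \<le> 80 * (\<alpha> * (log 2 (real p))\<^sup>2 + \<beta> * real m * log 2 (real p))}"
  show "\<forall>\<^sub>F fuel in sequentially. measure_pmf.prob (jq fuel \<alpha> \<beta> m 0 (p * m)) ?T \<ge> 1 - 80 / real p ^ 6"
  proof (cases "p = 1")
    case True
    then show ?thesis by (intro always_eventually allI) (simp add: order_trans[OF _ measure_nonneg])
  next
    case False
    then have p2: "2 \<le> p" using p by simp
    define c where "c = nat \<lceil>log 2 (real p)\<rceil>"
    have lg0: "0 \<le> log 2 (real p)" using p by simp
    have cr: "real c = real_of_int \<lceil>log 2 (real p)\<rceil>" unfolding c_def using lg0 by simp
    have c1: "real c \<le> log 2 (real p) + 1" using cr by linarith
    have c2: "log 2 (real p) \<le> real c" using cr by linarith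
    have pc: "real p \<le> 2 ^ c"
    proof -
      have "real p = 2 powr (log 2 (real p))" using p by simp
      also have "\<dots> \<le> 2 powr (real c)" using c2 by simp
      also have "\<dots> = 2 ^ c" by (simp add: powr_realpow)
      finally show ?thesis .
    qed
    define Lc where "Lc = \<alpha> * (1 + log 2 (real p)) + \<beta> * real m"
    show ?thesis unfolding eventually_sequentially
    proof (intro exI[where x="20 * c"] allI impI)
      fix fuel assume fu: "20 * c \<le> fuel"
      let ?M = "jq fuel \<alpha> \<beta> m 0 (p * m)"
      have tail: "measure_pmf.prob ?M (- goodset (real (20 * c) * Lc)) \<le> (3/4)^(20*c) * real (p * m - 0)^2 / real m^2"
        unfolding Lc_def using b al by (intro jq_tail[OF p m] fu) simp_all
      also have "\<dots> = (3/4)^(20*c) * real p ^ 2" using m by (simp add: power_mult_distrib)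
      also have "\<dots> \<le> 80 / real p ^ 6" by (rule prob_bound[OF p2 pc])
      finally have t1: "measure_pmf.prob ?M (- goodset (real (20 * c) * Lc)) \<le> 80 / real p ^ 6" .
      have sub: "goodset (real (20 * c) * Lc) \<subseteq> ?T"
        using time_bound[OF p2 m b al c1] unfolding goodset_def Lc_def by force
      have "measure_pmf.prob ?M (- goodset (real (20 * c) * Lc)) = 1 - measure_pmf.prob ?M (goodset (real (20 * c) * Lc))"
        using measure_pmf.prob_compl[of "goodset (real (20 * c) * Lc)" ?M] by (simp add: Compl_eq_Diff_UNIV)
      moreover have "measure_pmf.prob ?M (goodset (real (20 * c) * Lc)) \<le> measure_pmf.prob ?M ?T"
        by (rule measure_pmf.finite_measure_mono[OF sub]) simp
      ultimately show "1 - 80 / real p ^ 6 \<le> measure_pmf.prob ?M ?T" using t1 by linarith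
    qed
  qed
next
  fix p m :: nat and \<alpha> \<beta> :: real and fuel t bs P
  assume H: "1 \<le> p \<and> 1 \<le> m \<and> 1 \<le> \<beta> \<and> \<beta> \<le> \<alpha>"
    and S: "Some (t, bs) \<in> set_pmf (jq fuel \<alpha> \<beta> m 0 (p * m))" and "P < p"
  have inv: "binv m 0 (p * m) bs" by (rule jq_inv[OF S])
  show "base_time \<alpha> \<beta> m bs P \<le> 80 * (\<alpha> + \<beta> * real m + real m * log 2 (real m))"
    using base_part[OF inv] H by auto
qed simp

end
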